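(* Let $n\ge2$, $\xi\in\mathbb{S}^{n-1}$ and $f\in C^2_c(\mathbb{R}^n)$. Then $$\lim_{p\to n+}\Big(1-\frac np\Big)^{\frac pn}\|\xi\|^n_{\Pi^{*,n/p}_{p,n}f}=\frac1n\|\xi\|^n_{\Pi^*_nf},$$ i.e. $\lim_{p\to n+}\big[(1-\frac np)\int_0^\infty t^{-n^2/p}\|\Delta_{t\xi}f\|_{L^p}^n\frac{dt}{t}\big]^{p/n}=\frac1n\int_{\mathbb{R}^n}|\nabla f(x)\cdot\xi|^ndx$.
   Context: $\Delta_hf(x)=f(x+h)-f(x)$. $\|\xi\|^{sq}_{\Pi^{*,s}_{p,q}f}=\int_0^\infty t^{-sq}\|\Delta_{t\xi}f\|^q_{L^p}\frac{dt}{t}$ (here $s=n/p$, $q=n$), and $\|\xi\|^n_{\Pi^*_nf}=\int_{\mathbb{R}^n}|\nabla f(x)\cdot\xi|^ndx$. *)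

theory Defs
  imports "HOL-Analysis.Analysis"
begin

definition C2c_with_gradient :: "('a::euclidean_space \<Rightarrow> real) \<Rightarrow> ('a \<Rightarrow> 'a) \<Rightarrow> bool" where
  "C2c_with_gradient f g \<longleftrightarrow>
     (\<forall>x. (f has_derivative (\<lambda>h. g x \<bullet> h)) (at x)) \<and>
     (\<exists>H :: 'a \<Rightarrow> 'a \<Rightarrow>\<^sub>L 'a.
        (\<forall>x. (g has_derivative blinfun_apply (H x)) (at x)) \<and> continuous_on UNIV H) \<and>
     compact (closure {x. f x \<noteq> 0})"

definition Delta :: "'a::real_vector \<Rightarrow> ('a \<Rightarrow> real) \<Rightarrow> 'a \<Rightarrow> real" where
  "Delta h f x = f (x + h) - f x"

definition Lp_norm :: "real \<Rightarrow> ('a::euclidean_space \<Rightarrow> real) \<Rightarrow> real" where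
  "Lp_norm p u = (\<integral>x. \<bar>u x\<bar> powr p \<partial>lborel) powr (1 / p)"

(* integral over t in (0,inf) of t^(-sq) * ||Delta_(t xi) f||_p^q dt/t, i.e. the (sq)-th power of the norm of xi w.r.t. the body Pi^{star,s}_{p,q} f *)
definition PiStar_spq_pow :: "real \<Rightarrow> real \<Rightarrow> real \<Rightarrow> ('a::euclidean_space \<Rightarrow> real) \<Rightarrow> 'a \<Rightarrow> real" where
  "PiStar_spq_pow s p q f \<xi> =
     (\<integral>t\<in>{0<..}. t powr (- s * q) * Lp_norm p (Delta (t *\<^sub>R \<xi>) f) powr q / t \<partial>lborel)"

end

theory Submission
  imports Defs
begin



lemma set_integrable_lborel_HK:
  fixes f :: "real \<Rightarrow> real"
  assumes m: "(\<lambda>x. indicator S x * f x) \<in> borel_measurable lborel"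
    and i: "f integrable_on S" and nn: "\<And>x. x \<in> S \<Longrightarrow> 0 \<le> f x"
  shows "set_integrable lborel S f" "(LINT x:S|lborel. f x) = integral S f"
proof -
  have "f absolutely_integrable_on S" by (rule nonnegative_absolutely_integrable_1[OF i nn])
  hence "integrable lebesgue (\<lambda>x. indicator S x * f x)" by (simp add: set_integrable_def)
  hence "integrable lborel (\<lambda>x. indicator S x * f x)" using integrable_completion[OF m] by simp
  thus 1: "set_integrable lborel S f" unfolding set_integrable_def by simp
  show "(LINT x:S|lborel. f x) = integral S f" using set_borel_integral_eq_integral(2)[OF 1] .
qed

lemma P1:
  fixes \<epsilon> :: real assumes "0 < \<epsilon>"
  shows "set_integrable lborel {0<..1} (\<lambda>t. t powr (\<epsilon> - 1))"
        "(LINT t:{0<..1}|lborel. t powr (\<epsilon> - 1)) = 1 / \<epsilon>"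
proof -
  have h: "((\<lambda>x. x powr (\<epsilon> - 1)) has_integral (1 powr (\<epsilon> - 1 + 1) / (\<epsilon> - 1 + 1))) {0..1}"
    by (rule has_integral_powr_from_0) (use assms in auto)
  have eq: "((\<lambda>x. x powr (\<epsilon> - 1)) has_integral (1 / \<epsilon>)) {0<..1} \<longleftrightarrow> ((\<lambda>x. x powr (\<epsilon> - 1)) has_integral (1 / \<epsilon>)) {0..1}"
  proof (rule has_integral_spike_set_eq)
    show "negligible {x \<in> {0<..1::real} - {0..1}. x powr (\<epsilon> - 1) \<noteq> 0}" by (rule negligible_subset[of "{}"]) auto
    show "negligible {x \<in> {0..1::real} - {0<..1}. x powr (\<epsilon> - 1) \<noteq> 0}"
      by (rule negligible_subset[of "{0}"]) auto
  qed
  have h2: "((\<lambda>x. x powr (\<epsilon> - 1)) has_integral (1 / \<epsilon>)) {0<..1}" using h eq by simp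
  have m: "(\<lambda>x. indicator {0<..1::real} x * x powr (\<epsilon> - 1)) \<in> borel_measurable lborel" by measurable
  note r = set_integrable_lborel_HK[OF m has_integral_integrable[OF h2] powr_ge_zero]
  show "set_integrable lborel {0<..1} (\<lambda>t. t powr (\<epsilon> - 1))" by (rule r(1))
  show "(LINT t:{0<..1}|lborel. t powr (\<epsilon> - 1)) = 1 / \<epsilon>" using r(2) integral_unique[OF h2] by argo
qed

lemma P2:
  shows "set_integrable lborel {1..} (\<lambda>t::real. t powr (-2))"
        "(LINT t:{1..}|lborel. t powr (-2::real)) = 1"
proof -
  have h: "((\<lambda>x::real. x powr (-2)) has_integral (-(1 powr (-2+1)) / (-2+1))) {1..}"
    by (rule has_integral_powr_to_inf) auto
  have h2: "((\<lambda>x::real. x powr (-2)) has_integral 1) {1..}" using h by simp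
  have m: "(\<lambda>x. indicator {(1::real)..} x * x powr (-2)) \<in> borel_measurable lborel" by measurable
  note r = set_integrable_lborel_HK[OF m has_integral_integrable[OF h2] powr_ge_zero]
  show "set_integrable lborel {1..} (\<lambda>t::real. t powr (-2))" by (rule r(1))
  show "(LINT t:{1..}|lborel. t powr (-2::real)) = 1" using r(2) integral_unique[OF h2] by argo
qed

lemma P3:
  shows "set_integrable lborel {0<..1::real} (\<lambda>t. 1::real)"
        "(LINT t:{0<..1::real}|lborel. (1::real)) = 1"
proof -
  show "set_integrable lborel {0<..1::real} (\<lambda>t. 1::real)"
    by (simp add: set_integrable_def)
  show "(LINT t:{0<..1::real}|lborel. (1::real)) = 1"
    by (simp add: set_lebesgue_integral_def)
qed




lemma pointwise_bound:
  fixes Nr p A C \<delta> e \<epsilon> t :: real and \<phi> :: "real \<Rightarrow> real"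
  assumes Nr: "2 \<le> Nr" and A: "0 \<le> A" and p: "Nr < p" "p < Nr + 1"
    and \<delta>: "0 < \<delta>" "\<delta> \<le> 1" and e: "0 < e"
    and bnd: "\<And>t. 0 < t \<Longrightarrow> 0 \<le> \<phi> t \<and> \<phi> t \<le> C"
    and loc: "\<And>t. 0 < t \<Longrightarrow> t < \<delta> \<Longrightarrow> \<bar>\<phi> t / t powr Nr - A\<bar> \<le> e"
    and \<epsilon>: "\<epsilon> = Nr - Nr * Nr / p"
  shows "\<bar>indicator {0<..} t * (t powr (- (Nr/p) * Nr) * \<phi> t / t) - A * (indicator {0<..1} t * t powr (\<epsilon> - 1))\<bar>
     \<le> e * (indicator {0<..1} t * t powr (\<epsilon> - 1)) + ((C / \<delta> powr Nr + A) / \<delta>) * indicator {0<..1} t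
        + C * (indicator {1..} t * t powr (-2))"
proof -
  have p0: "0 < p" using p Nr by linarith
  have C0: "0 \<le> C" using bnd[of 1] by auto
  have \<epsilon>0: "0 < \<epsilon>" unfolding \<epsilon> using p p0 Nr by (simp add: field_simps)
  have \<epsilon>1: "\<epsilon> \<le> 1"
  proof -
    have "\<epsilon> = (Nr / p) * (p - Nr)" unfolding \<epsilon> using p0 by (simp add: field_simps)
    also have "\<dots> \<le> 1 * (p - Nr)" using p p0 Nr by (intro mult_right_mono) auto
    finally show ?thesis using p by simp
  qed
  define K where "K = (C / \<delta> powr Nr + A) / \<delta>"
  have K0: "0 \<le> K" unfolding K_def using C0 A \<delta> by simp
  show ?thesis
  proof (cases "t \<le> 0")
    case True then show ?thesis by (simp add: indicator_def)
  next
    case False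
    hence t0: "0 < t" by simp
    have kform: "t powr (- (Nr/p) * Nr) * \<phi> t / t = t powr (\<epsilon> - 1) * (\<phi> t / t powr Nr)"
    proof -
      have e1: "t powr (\<epsilon> - 1) = t powr \<epsilon> / t" using t0 by (simp add: powr_diff)
      have e2: "t powr (- (Nr/p) * Nr) = t powr \<epsilon> / t powr Nr"
        using t0 by (simp add: powr_diff[symmetric] \<epsilon>)
      show ?thesis unfolding e1 e2 using t0 by (simp add: field_simps)
    qed
    show ?thesis
    proof (cases "t \<le> 1")
      case t1: True
      have ind: "indicator {0<..} t = (1::real)" "indicator {0<..1} t = (1::real)" using t0 t1 by auto
      have P2: "0 \<le> C * (indicator {1..} t * t powr (-2))" using C0 by simp
      have LHS: "\<bar>indicator {0<..} t * (t powr (- (Nr/p) * Nr) * \<phi> t / t) - A * (indicator {0<..1} t * t powr (\<epsilon> - 1))\<bar>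
          = t powr (\<epsilon> - 1) * \<bar>\<phi> t / t powr Nr - A\<bar>"
      proof -
        have "indicator {0<..} t * (t powr (- (Nr/p) * Nr) * \<phi> t / t) - A * (indicator {0<..1} t * t powr (\<epsilon> - 1)) = t powr (\<epsilon> - 1) * (\<phi> t / t powr Nr - A)"
          by (simp only: ind kform) (simp add: algebra_simps)
        then show ?thesis by (simp only: abs_mult abs_of_nonneg[OF powr_ge_zero])
      qed
      show ?thesis
      proof (cases "t < \<delta>")
        case True
        have "t powr (\<epsilon> - 1) * \<bar>\<phi> t / t powr Nr - A\<bar> \<le> t powr (\<epsilon> - 1) * e"
          using loc[OF t0 True] by (intro mult_left_mono) auto
        then show ?thesis using LHS ind P2 K0 by (simp add: K_def mult.commute)
      next
        case False
        have tp: "t powr (\<epsilon> - 1) \<le> 1 / \<delta>"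
        proof -
          have "t powr (\<epsilon> - 1) \<le> t powr (-1)" using \<epsilon>0 t0 t1 by (intro powr_mono') auto
          also have "\<dots> = 1 / t" using t0 by (simp add: powr_minus divide_inverse)
          also have "\<dots> \<le> 1 / \<delta>" using False \<delta> by (simp add: frac_le)
          finally show ?thesis .
        qed
        have hb: "\<phi> t / t powr Nr \<le> C / \<delta> powr Nr"
        proof -
          have "\<delta> powr Nr \<le> t powr Nr" using False \<delta> Nr by (intro powr_mono2) auto
          moreover have "0 < \<delta> powr Nr" using \<delta> by simp
          ultimately show ?thesis using bnd[OF t0] C0 by (meson frac_le)
        qed
        have "\<bar>\<phi> t / t powr Nr - A\<bar> \<le> C / \<delta> powr Nr + A" 
        proof -
          have "0 \<le> \<phi> t / t powr Nr" using bnd[OF t0] by simp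
          moreover have "0 \<le> C / \<delta> powr Nr" using C0 by simp
          ultimately show ?thesis using hb A by (simp add: abs_le_iff)
        qed
        hence "t powr (\<epsilon> - 1) * \<bar>\<phi> t / t powr Nr - A\<bar> \<le> (1 / \<delta>) * (C / \<delta> powr Nr + A)"
          using tp \<delta> by (intro mult_mono) auto
        hence "t powr (\<epsilon> - 1) * \<bar>\<phi> t / t powr Nr - A\<bar> \<le> K" by (simp add: K_def)
        moreover have "0 \<le> e * (indicator {0<..1} t * t powr (\<epsilon> - 1))" using e by simp
        ultimately show ?thesis using LHS ind P2 by (simp add: K_def)
      qed
    next
      case False
      hence t1: "1 < t" by simp
      have ind: "indicator {0<..} t = (1::real)" "indicator {0<..1} t = (0::real)" "indicator {1..} t = (1::real)"
        using t0 t1 by auto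
      have ex: "- (Nr/p) * Nr \<le> -1"
      proof -
        have "2 * Nr \<le> Nr * Nr" using Nr by (intro mult_right_mono) auto
        hence "p \<le> Nr * Nr" using p Nr by linarith
        hence "1 \<le> Nr * Nr / p" using p0 by simp
        thus ?thesis by simp
      qed
      have "t powr (- (Nr/p) * Nr) * \<phi> t / t \<le> t powr (-1) * C / t"
        using bnd[OF t0] t0 t1 ex by (intro divide_right_mono mult_mono powr_mono) auto
      also have "\<dots> = C * t powr (-2)" using t0 by (simp add: powr_minus power2_eq_square field_simps)
      finally have "t powr (- (Nr/p) * Nr) * \<phi> t / t \<le> C * t powr (-2)" .
      moreover have "0 \<le> t powr (- (Nr/p) * Nr) * \<phi> t / t" using bnd[OF t0] t0 by simp
      ultimately show ?thesis by (simp add: ind)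
    qed
  qed
qed




lemma key_bound:
  fixes Nr p A C \<delta> e :: real and \<phi> :: "real \<Rightarrow> real"
  assumes Nr: "2 \<le> Nr" and A: "0 \<le> A" and p: "Nr < p" "p < Nr + 1"
    and \<delta>: "0 < \<delta>" "\<delta> \<le> 1" and e: "0 < e"
    and meas[measurable]: "\<phi> \<in> borel_measurable lborel"
    and bnd: "\<And>t. 0 < t \<Longrightarrow> 0 \<le> \<phi> t \<and> \<phi> t \<le> C"
    and loc: "\<And>t. 0 < t \<Longrightarrow> t < \<delta> \<Longrightarrow> \<bar>\<phi> t / t powr Nr - A\<bar> \<le> e"
  shows "\<bar>(1 - Nr/p) * (\<integral>t\<in>{0<..}. t powr (- (Nr/p) * Nr) * \<phi> t / t \<partial>lborel) - A/Nr\<bar>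
          \<le> e/Nr + (1 - Nr/p) * ((C / \<delta> powr Nr + A) / \<delta> + C)"
proof -
  define \<epsilon> where "\<epsilon> = Nr - Nr*Nr/p"
  define a where "a = 1 - Nr/p"
  define K where "K = (C / \<delta> powr Nr + A) / \<delta>"
  have p0: "0 < p" using p Nr by linarith
  have \<epsilon>a: "\<epsilon> = Nr * a" unfolding \<epsilon>_def a_def by (simp add: field_simps)
  have a0: "0 < a" unfolding a_def using p p0 by (simp add: field_simps)
  have \<epsilon>0: "0 < \<epsilon>" using \<epsilon>a a0 Nr by simp
  define P1 where "P1 t = indicator {0<..1} t * t powr (\<epsilon> - 1)" for t :: real
  define P2 where "P2 t = indicator {1..} t * t powr (-2)" for t :: real
  define P3 where "P3 t = (indicator {0<..1} t :: real)" for t :: real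
  define Kf where "Kf t = indicator {0<..} t * (t powr (- (Nr/p) * Nr) * \<phi> t / t)" for t :: real
  define G where "G t = A * P1 t" for t
  define B where "B t = e * P1 t + K * P3 t + C * P2 t" for t
  have iP1: "integrable lborel P1" "integral\<^sup>L lborel P1 = 1 / \<epsilon>"
    using P1[OF \<epsilon>0] unfolding P1_def set_integrable_def set_lebesgue_integral_def by auto
  have iP2: "integrable lborel P2" "integral\<^sup>L lborel P2 = 1"
    using P2 unfolding P2_def set_integrable_def set_lebesgue_integral_def by auto
  have iP3: "integrable lborel P3" "integral\<^sup>L lborel P3 = 1"
    using P3 unfolding P3_def set_integrable_def set_lebesgue_integral_def by auto
  have iG: "integrable lborel G" "integral\<^sup>L lborel G = A / \<epsilon>"
    using iP1 unfolding G_def by auto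
  have iB: "integrable lborel B" "integral\<^sup>L lborel B = e / \<epsilon> + K + C"
    using iP1 iP2 iP3 unfolding B_def by auto
  have pw: "\<bar>Kf t - G t\<bar> \<le> B t" for t
    unfolding Kf_def G_def B_def P1_def P2_def P3_def K_def
    by (rule pointwise_bound[OF Nr A p \<delta> e bnd loc \<epsilon>_def]) auto
  have B0: "0 \<le> B t" for t using pw[of t] by linarith
  have mK: "Kf \<in> borel_measurable lborel" unfolding Kf_def by measurable
  have iK: "integrable lborel Kf"
  proof (rule Bochner_Integration.integrable_bound[OF _ mK])
    show "integrable lborel (\<lambda>t. \<bar>G t\<bar> + B t)" using iG iB by auto
    show "AE t in lborel. norm (Kf t) \<le> norm (\<bar>G t\<bar> + B t)"
    proof (rule AE_I2)
      fix t
      have "\<bar>Kf t\<bar> \<le> \<bar>G t\<bar> + B t" using pw[of t] by linarith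
      thus "norm (Kf t) \<le> norm (\<bar>G t\<bar> + B t)" using B0[of t] by simp
    qed
  qed
  have I: "(\<integral>t\<in>{0<..}. t powr (- (Nr/p) * Nr) * \<phi> t / t \<partial>lborel) = integral\<^sup>L lborel Kf"
    unfolding set_lebesgue_integral_def Kf_def by simp
  have "\<bar>integral\<^sup>L lborel Kf - integral\<^sup>L lborel G\<bar> = \<bar>integral\<^sup>L lborel (\<lambda>t. Kf t - G t)\<bar>"
    using iK iG by simp
  also have "\<dots> \<le> integral\<^sup>L lborel (\<lambda>t. \<bar>Kf t - G t\<bar>)"
    using integral_norm_bound[of lborel "\<lambda>t. Kf t - G t"] by simp
  also have "\<dots> \<le> integral\<^sup>L lborel B"
    using iK iG iB pw by (intro integral_mono) auto
  finally have d: "\<bar>integral\<^sup>L lborel Kf - A / \<epsilon>\<bar> \<le> e / \<epsilon> + K + C" using iG iB by simp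
  have "\<bar>a * integral\<^sup>L lborel Kf - A / Nr\<bar> = a * \<bar>integral\<^sup>L lborel Kf - A / \<epsilon>\<bar>"
  proof -
    have "a * integral\<^sup>L lborel Kf - A / Nr = a * (integral\<^sup>L lborel Kf - A / \<epsilon>)"
      using \<epsilon>a a0 Nr by (simp add: field_simps)
    thus ?thesis using a0 by (simp add: abs_mult)
  qed
  also have "\<dots> \<le> a * (e / \<epsilon> + K + C)" using d a0 by (intro mult_left_mono) auto
  also have "\<dots> = e / Nr + a * (K + C)" using \<epsilon>a a0 Nr by (simp add: field_simps)
  finally show ?thesis unfolding I a_def K_def by simp
qed




lemma integral_limit:
  fixes Nr A C :: real and \<phi> :: "real \<Rightarrow> real \<Rightarrow> real"
  assumes Nr: "2 \<le> Nr" and A: "0 \<le> A"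
  and meas: "\<And>p. Nr < p \<Longrightarrow> p < Nr + 1 \<Longrightarrow> \<phi> p \<in> borel_measurable lborel"
  and bnd: "\<And>p t. Nr < p \<Longrightarrow> p < Nr + 1 \<Longrightarrow> 0 < t \<Longrightarrow> 0 \<le> \<phi> p t \<and> \<phi> p t \<le> C"
  and loc: "\<And>e. 0 < e \<Longrightarrow> \<exists>\<delta>>0. \<forall>p t. Nr < p \<longrightarrow> p < Nr + \<delta> \<longrightarrow> 0 < t \<longrightarrow> t < \<delta> \<longrightarrow> \<bar>\<phi> p t / t powr Nr - A\<bar> \<le> e"
  shows "((\<lambda>p. (1 - Nr/p) * (\<integral>t\<in>{0<..}. t powr (- (Nr/p) * Nr) * \<phi> p t / t \<partial>lborel)) \<longlongrightarrow> A/Nr) (at_right Nr)"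
proof (rule tendstoI)
  fix e :: real assume e: "0 < e"
  have "0 < Nr * e / 2" using e Nr by simp
  from loc[OF this] obtain \<delta>0 where \<delta>0: "\<delta>0 > 0" and h\<delta>: "\<forall>p t. Nr < p \<longrightarrow> p < Nr + \<delta>0 \<longrightarrow> 0 < t \<longrightarrow> t < \<delta>0 \<longrightarrow> \<bar>\<phi> p t / t powr Nr - A\<bar> \<le> Nr * e / 2"
    by blast
  define \<delta> where "\<delta> = min \<delta>0 1"
  have \<delta>: "0 < \<delta>" "\<delta> \<le> 1" "\<delta> \<le> \<delta>0" using \<delta>0 unfolding \<delta>_def by auto
  define M where "M = (C / \<delta> powr Nr + A) / \<delta> + C"
  have "((\<lambda>p. (1 - Nr/p) * M) \<longlongrightarrow> (1 - Nr/Nr) * M) (at_right Nr)"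
    using Nr by (intro tendsto_intros) auto
  hence "((\<lambda>p. (1 - Nr/p) * M) \<longlongrightarrow> 0) (at_right Nr)" using Nr by simp
  hence ev1: "eventually (\<lambda>p. (1 - Nr/p) * M < e/2) (at_right Nr)"
    using e by (intro order_tendstoD(2)) auto
  have ev2: "eventually (\<lambda>p. Nr < p \<and> p < Nr + \<delta>) (at_right Nr)"
    unfolding eventually_at_right_field using \<delta> by (intro exI[of _ "Nr + \<delta>"]) auto
  show "eventually (\<lambda>p. dist ((1 - Nr/p) * (\<integral>t\<in>{0<..}. t powr (- (Nr/p) * Nr) * \<phi> p t / t \<partial>lborel)) (A/Nr) < e) (at_right Nr)"
    using ev1 ev2
  proof eventually_elim
    case (elim p)
    have p: "Nr < p" "p < Nr + 1" using elim \<delta> by auto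
    have kb: "\<bar>(1 - Nr/p) * (\<integral>t\<in>{0<..}. t powr (- (Nr/p) * Nr) * \<phi> p t / t \<partial>lborel) - A/Nr\<bar>
          \<le> (Nr * e / 2)/Nr + (1 - Nr/p) * ((C / \<delta> powr Nr + A) / \<delta> + C)"
    proof (rule key_bound[OF Nr A p \<delta>(1,2) \<open>0 < Nr * e / 2\<close> meas[OF p] bnd[OF p]])
      fix t assume "0 < t" "t < \<delta>"
      thus "\<bar>\<phi> p t / t powr Nr - A\<bar> \<le> Nr * e / 2" using h\<delta> elim \<delta> by auto
    qed
    have "(Nr * e / 2)/Nr = e/2" using Nr by simp
    thus ?case using kb elim unfolding dist_real_def M_def by linarith
  qed
qed




lemma C2c_basic:
  fixes f :: "'a::euclidean_space \<Rightarrow> real" and g :: "'a \<Rightarrow> 'a"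
  assumes "C2c_with_gradient f g"
  shows "\<And>x. (f has_derivative (\<lambda>h. g x \<bullet> h)) (at x)"
    and "continuous_on UNIV f" and "continuous_on UNIV g"
    and "\<exists>R>0. \<forall>x. R < norm x \<longrightarrow> f x = 0 \<and> g x = 0"
proof -
  from assms obtain H :: "'a \<Rightarrow> 'a \<Rightarrow>\<^sub>L 'a" where
    df: "\<And>x. (f has_derivative (\<lambda>h. g x \<bullet> h)) (at x)" and
    dg: "\<And>x. (g has_derivative blinfun_apply (H x)) (at x)" and
    cpt: "compact (closure {x. f x \<noteq> 0})"
    unfolding C2c_with_gradient_def by blast
  show "\<And>x. (f has_derivative (\<lambda>h. g x \<bullet> h)) (at x)" by (rule df)
  show "continuous_on UNIV f" by (rule has_derivative_continuous_on) (use df in auto)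
  show "continuous_on UNIV g" by (rule has_derivative_continuous_on) (use dg in auto)
  obtain R where R: "R > 0" "\<forall>x\<in>closure {x. f x \<noteq> 0}. norm x \<le> R"
    using compact_imp_bounded[OF cpt] unfolding bounded_pos by blast
  have "f x = 0 \<and> g x = 0" if x: "R < norm x" for x
  proof -
    let ?U = "- closure {x. f x \<noteq> 0}"
    have xU: "x \<in> ?U"
    proof
      assume "x \<in> closure {x. f x \<noteq> 0}"
      hence "norm x \<le> R" using R(2) by blast
      thus False using x by simp
    qed
    have fU: "\<And>y. y \<in> ?U \<Longrightarrow> f y = 0" using closure_subset[of "{x. f x \<noteq> 0}"] by blast
    have "((\<lambda>_. 0) has_derivative (\<lambda>h. g x \<bullet> h)) (at x)"
    proof (rule has_derivative_transform_within_open[OF df[of x] _ xU, where g="\<lambda>_. 0"])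
      show "open ?U" by auto
      show "\<And>y. y \<in> ?U \<Longrightarrow> f y = 0" by (rule fU)
    qed
    moreover have "((\<lambda>_. 0::real) has_derivative (\<lambda>h. 0)) (at x)" by (rule has_derivative_const)
    ultimately have "(\<lambda>h. g x \<bullet> h) = (\<lambda>h. 0)" by (rule has_derivative_unique)
    hence "g x \<bullet> g x = 0" by meson
    thus ?thesis using fU[OF xU] by simp
  qed
  thus "\<exists>R>0. \<forall>x. R < norm x \<longrightarrow> f x = 0 \<and> g x = 0" using R by blast
qed

lemma C2c_bounds:
  fixes f :: "'a::euclidean_space \<Rightarrow> real" and g :: "'a \<Rightarrow> 'a"
  assumes "C2c_with_gradient f g"
  shows "\<exists>M>0. \<forall>x. \<bar>f x\<bar> \<le> M" and "\<exists>L>0. \<forall>x. norm (g x) \<le> L"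
proof -
  note b = C2c_basic[OF assms]
  obtain R where R: "R > 0" "\<forall>x. R < norm x \<longrightarrow> f x = 0 \<and> g x = 0" using b(4) by blast
  have cf: "compact (f ` cball 0 R)"
    by (rule compact_continuous_image) (use b(2) continuous_on_subset in auto)
  obtain M where M: "M > 0" "\<forall>y\<in>f ` cball 0 R. norm y \<le> M"
    using compact_imp_bounded[OF cf] unfolding bounded_pos by blast
  have "\<bar>f x\<bar> \<le> M" for x
  proof (cases "norm x \<le> R")
    case True thus ?thesis using M by auto
  next
    case False thus ?thesis using R M by auto
  qed
  thus "\<exists>M>0. \<forall>x. \<bar>f x\<bar> \<le> M" using M by blast
  have cg: "compact (g ` cball 0 R)"
    by (rule compact_continuous_image) (use b(3) continuous_on_subset in auto)
  obtain L where L: "L > 0" "\<forall>y\<in>g ` cball 0 R. norm y \<le> L"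
    using compact_imp_bounded[OF cg] unfolding bounded_pos by blast
  have "norm (g x) \<le> L" for x
  proof (cases "norm x \<le> R")
    case True thus ?thesis using L by auto
  next
    case False thus ?thesis using R L by auto
  qed
  thus "\<exists>L>0. \<forall>x. norm (g x) \<le> L" using L by blast
qed

lemma C2c_mvt:
  fixes f :: "'a::euclidean_space \<Rightarrow> real" and g :: "'a \<Rightarrow> 'a"
  assumes "C2c_with_gradient f g" and t: "0 < t"
  shows "\<exists>y. norm (y - x) \<le> t * norm \<xi> \<and> f (x + t *\<^sub>R \<xi>) - f x = t * (g y \<bullet> \<xi>)"
proof -
  note df = C2c_basic(1)[OF assms(1)]
  define h where "h s = f (x + s *\<^sub>R \<xi>)" for s
  have "DERIV h s :> g (x + s *\<^sub>R \<xi>) \<bullet> \<xi>" for s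
  proof -
    have d1: "((\<lambda>s. x + s *\<^sub>R \<xi>) has_derivative (\<lambda>u. u *\<^sub>R \<xi>)) (at s)"
      by (auto intro!: derivative_eq_intros)
    have "((\<lambda>s. f (x + s *\<^sub>R \<xi>)) has_derivative (\<lambda>u. g (x + s *\<^sub>R \<xi>) \<bullet> (u *\<^sub>R \<xi>))) (at s)"
      using has_derivative_compose[OF d1 df] by simp
    moreover have "(\<lambda>u. g (x + s *\<^sub>R \<xi>) \<bullet> (u *\<^sub>R \<xi>)) = (*) (g (x + s *\<^sub>R \<xi>) \<bullet> \<xi>)"
      by (auto simp: mult.commute)
    ultimately show ?thesis unfolding h_def has_field_derivative_def by simp
  qed
  then obtain z where z: "0 < z" "z < t" "h t - h 0 = (t - 0) * (g (x + z *\<^sub>R \<xi>) \<bullet> \<xi>)"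
    using MVT2[OF t, of h "\<lambda>s. g (x + s *\<^sub>R \<xi>) \<bullet> \<xi>"] by blast
  show ?thesis
    by (rule exI[of _ "x + z *\<^sub>R \<xi>"]) (use z in \<open>auto simp: h_def intro!: mult_right_mono\<close>)
qed

lemma C2c_unif:
  fixes f :: "'a::euclidean_space \<Rightarrow> real" and g :: "'a \<Rightarrow> 'a"
  assumes "C2c_with_gradient f g" and d: "0 < d"
  shows "\<exists>\<eta>>0. \<forall>x y. norm (x - y) < \<eta> \<longrightarrow> norm (g x - g y) < d"
proof -
  note b = C2c_basic[OF assms(1)]
  obtain R where R: "R > 0" "\<forall>x. R < norm x \<longrightarrow> f x = 0 \<and> g x = 0" using b(4) by blast
  have "uniformly_continuous_on (cball 0 (R+1)) g"
    by (rule compact_uniformly_continuous) (use b(3) continuous_on_subset in auto)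
  then obtain \<eta>0 where \<eta>0: "\<eta>0 > 0" "\<forall>x\<in>cball 0 (R+1). \<forall>x'\<in>cball 0 (R+1). dist x' x < \<eta>0 \<longrightarrow> dist (g x') (g x) < d"
    unfolding uniformly_continuous_on_def using d by blast
  define \<eta> where "\<eta> = min \<eta>0 1"
  have "norm (g x - g y) < d" if xy: "norm (x - y) < \<eta>" for x y
  proof (cases "norm x \<le> R + 1 \<and> norm y \<le> R + 1")
    case True
    thus ?thesis using \<eta>0(2) xy unfolding \<eta>_def by (auto simp: dist_norm)
  next
    case False
    have "norm x \<le> norm y + norm (x - y)" "norm y \<le> norm x + norm (x - y)"
      using norm_triangle_ineq2[of x y] norm_triangle_ineq2[of y x] by (auto simp: norm_minus_commute)
    hence "R < norm x \<and> R < norm y" using False xy unfolding \<eta>_def by auto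
    thus ?thesis using R d by auto
  qed
  thus ?thesis using \<eta>0 unfolding \<eta>_def by (intro exI[of _ "min \<eta>0 1"]) auto
qed




lemma integrable_cball_bound:
  fixes h :: "'a::euclidean_space \<Rightarrow> real"
  assumes m: "h \<in> borel_measurable lborel" and b: "\<And>x. \<bar>h x\<bar> \<le> c * indicator (cball 0 r) x"
  shows "integrable lborel h"
proof (rule Bochner_Integration.integrable_bound[OF _ m])
  show "integrable lborel (\<lambda>x. c * indicator (cball (0::'a) r) x)"
    using emeasure_lborel_cball_finite by (intro integrable_mult_right integrable_real_indicator) auto
  show "AE x in lborel. norm (h x) \<le> norm (c * indicator (cball 0 r) x)"
  proof (rule AE_I2)
    fix x :: 'a
    have "0 \<le> c * indicator (cball (0::'a) r) x" using b[of x] by linarith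
    thus "norm (h x) \<le> norm (c * indicator (cball (0::'a) r) x)" using b[of x] by simp
  qed
qed

lemma C2c_diffquot:
  fixes f :: "'a::euclidean_space \<Rightarrow> real" and g :: "'a \<Rightarrow> 'a"
  assumes C2c: "C2c_with_gradient f g" and \<xi>: "norm \<xi> = 1" and d: "0 < d"
  shows "\<exists>\<eta>>0. \<eta> \<le> 1 \<and> (\<forall>t x. 0 < t \<longrightarrow> t < \<eta> \<longrightarrow> \<bar>Delta (t *\<^sub>R \<xi>) f x / t - g x \<bullet> \<xi>\<bar> \<le> d)"
proof -
  obtain \<eta>0 where \<eta>0: "\<eta>0 > 0" "\<forall>x y. norm (x - y) < \<eta>0 \<longrightarrow> norm (g x - g y) < d"
    using C2c_unif[OF C2c d] by blast
  have "\<bar>Delta (t *\<^sub>R \<xi>) f x / t - g x \<bullet> \<xi>\<bar> \<le> d" if t: "0 < t" "t < min \<eta>0 1" for t x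
  proof -
    obtain y where y: "norm (y - x) \<le> t * norm \<xi>" "f (x + t *\<^sub>R \<xi>) - f x = t * (g y \<bullet> \<xi>)"
      using C2c_mvt[OF C2c t(1)] by blast
    have "Delta (t *\<^sub>R \<xi>) f x / t = g y \<bullet> \<xi>" using y(2) t unfolding Delta_def by simp
    hence "\<bar>Delta (t *\<^sub>R \<xi>) f x / t - g x \<bullet> \<xi>\<bar> = \<bar>(g y - g x) \<bullet> \<xi>\<bar>" by (simp add: inner_diff_left)
    also have "\<dots> \<le> norm (g y - g x) * norm \<xi>" by (rule Cauchy_Schwarz_ineq2)
    also have "\<dots> \<le> d"
    proof -
      have "norm (y - x) < \<eta>0" using y(1) t \<xi> by simp
      hence "norm (g y - g x) < d" using \<eta>0(2) by blast
      thus ?thesis using \<xi> by simp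
    qed
    finally show ?thesis .
  qed
  thus ?thesis using \<eta>0 by (intro exI[of _ "min \<eta>0 1"]) auto
qed

lemma C2c_dq_bound:
  fixes f :: "'a::euclidean_space \<Rightarrow> real" and g :: "'a \<Rightarrow> 'a"
  assumes C2c: "C2c_with_gradient f g" and \<xi>: "norm \<xi> = 1" and L: "\<forall>x. norm (g x) \<le> L" and t: "0 < t"
  shows "\<bar>Delta (t *\<^sub>R \<xi>) f x / t\<bar> \<le> L"
proof -
  obtain y where y: "norm (y - x) \<le> t * norm \<xi>" "f (x + t *\<^sub>R \<xi>) - f x = t * (g y \<bullet> \<xi>)"
    using C2c_mvt[OF C2c t] by blast
  have "Delta (t *\<^sub>R \<xi>) f x / t = g y \<bullet> \<xi>" using y(2) t unfolding Delta_def by simp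
  also have "\<bar>\<dots>\<bar> \<le> norm (g y) * norm \<xi>" by (rule Cauchy_Schwarz_ineq2)
  also have "\<dots> \<le> L" using L \<xi> by simp
  finally show ?thesis .
qed

lemma C2c_support:
  fixes f :: "'a::euclidean_space \<Rightarrow> real" and g :: "'a \<Rightarrow> 'a"
  assumes R: "\<forall>x. R < norm x \<longrightarrow> f x = 0 \<and> g x = 0" and \<xi>: "norm \<xi> = 1"
    and t: "0 \<le> t" "t \<le> 1" and x: "R + 1 < norm x"
  shows "Delta (t *\<^sub>R \<xi>) f x = 0"
proof -
  have "norm x \<le> norm (x + t *\<^sub>R \<xi>) + norm (-(t *\<^sub>R \<xi>))"
    using norm_triangle_ineq[of "x + t *\<^sub>R \<xi>" "-(t *\<^sub>R \<xi>)"] by simp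
  hence "R < norm (x + t *\<^sub>R \<xi>)" using t x \<xi> by simp
  thus ?thesis using R x unfolding Delta_def by auto
qed





lemma meas1:
  fixes f :: "'a::euclidean_space \<Rightarrow> real"
  assumes c: "continuous_on UNIV f"
  shows "(\<lambda>x. \<bar>Delta (t *\<^sub>R \<xi>) f x / t\<bar> powr p) \<in> borel_measurable lborel"
proof -
  have "continuous_on UNIV (\<lambda>x. (f (x + t *\<^sub>R \<xi>) - f x))"
    by (intro continuous_intros continuous_on_compose2[OF c]) auto
  hence m: "(\<lambda>x. (f (x + t *\<^sub>R \<xi>) - f x)) \<in> borel_measurable borel"
    by (rule borel_measurable_continuous_onI)
  hence m2: "(\<lambda>x. (f (x + t *\<^sub>R \<xi>) - f x) / t) \<in> borel_measurable borel"
    by (rule borel_measurable_divide) simp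
  have "(\<lambda>x. \<bar>(f (x + t *\<^sub>R \<xi>) - f x) / t\<bar> powr p) \<in> borel_measurable borel"
    by (rule measurable_abs_powr[OF m2])
  thus ?thesis unfolding Delta_def by simp
qed

lemma meas2:
  fixes f :: "'a::euclidean_space \<Rightarrow> real"
  assumes c: "continuous_on UNIV f"
  shows "(\<lambda>z::real \<times> 'a. \<bar>f (snd z + fst z *\<^sub>R \<xi>) - f (snd z)\<bar> powr p) \<in> borel_measurable (lborel \<Otimes>\<^sub>M lborel)"
proof -
  have "continuous_on UNIV (\<lambda>z::real \<times> 'a. f (snd z + fst z *\<^sub>R \<xi>) - f (snd z))"
    by (intro continuous_intros continuous_on_compose2[OF c]) auto
  hence m: "(\<lambda>z::real \<times> 'a. f (snd z + fst z *\<^sub>R \<xi>) - f (snd z)) \<in> borel_measurable borel"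
    by (rule borel_measurable_continuous_onI)
  have "(\<lambda>z::real \<times> 'a. \<bar>f (snd z + fst z *\<^sub>R \<xi>) - f (snd z)\<bar> powr p) \<in> borel_measurable borel"
    by (rule measurable_abs_powr[OF m])
  thus ?thesis unfolding lborel_prod by simp
qed




lemma meas_g:
  fixes g :: "'a::euclidean_space \<Rightarrow> 'a"
  assumes c: "continuous_on UNIV g"
  shows "(\<lambda>x. \<bar>g x \<bullet> \<xi>\<bar> powr p) \<in> borel_measurable lborel"
proof -
  have "continuous_on UNIV (\<lambda>x. g x \<bullet> \<xi>)"
    by (intro continuous_intros c)
  hence m: "(\<lambda>x. g x \<bullet> \<xi>) \<in> borel_measurable borel"
    by (rule borel_measurable_continuous_onI)
  have "(\<lambda>x. \<bar>g x \<bullet> \<xi>\<bar> powr p) \<in> borel_measurable borel"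
    by (rule measurable_abs_powr[OF m])
  thus ?thesis by simp
qed

lemma J_limit:
  fixes f :: "'a::euclidean_space \<Rightarrow> real" and g :: "'a \<Rightarrow> 'a" and Nr e :: real
  assumes C2c: "C2c_with_gradient f g" and \<xi>: "norm \<xi> = 1" and Nr: "0 < Nr" and e: "0 < e"
  shows "\<exists>\<delta>>0. \<forall>p t. Nr < p \<longrightarrow> p < Nr + \<delta> \<longrightarrow> 0 < t \<longrightarrow> t < \<delta> \<longrightarrow>
     \<bar>(\<integral>x. \<bar>Delta (t *\<^sub>R \<xi>) f x / t\<bar> powr p \<partial>lborel) - (\<integral>x. \<bar>g x \<bullet> \<xi>\<bar> powr Nr \<partial>lborel)\<bar> \<le> e"
proof -
  note b = C2c_basic[OF C2c]
  obtain R where R: "R > 0" "\<forall>x. R < norm x \<longrightarrow> f x = 0 \<and> g x = 0" using b(4) by blast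
  obtain L where L: "L > 0" "\<forall>x. norm (g x) \<le> L" using C2c_bounds(2)[OF C2c] by blast
  define V where "V = measure lborel (cball (0::'a) (R+1))"
  have V0: "0 \<le> V" unfolding V_def by simp
  define Kc where "Kc = {Nr..Nr+1} \<times> {0..L}"
  have cKc: "compact Kc" unfolding Kc_def by (intro compact_Times compact_Icc)
  have "continuous_on Kc (\<lambda>z. snd z powr fst z)"
    by (rule continuous_on_powr') (use Nr in \<open>auto simp: Kc_def intro!: continuous_intros\<close>)
  hence "uniformly_continuous_on Kc (\<lambda>z. snd z powr fst z)" using cKc by (rule compact_uniformly_continuous)
  moreover have eV: "0 < e / (V + 1)" using e V0 by simp
  ultimately obtain d where d: "d > 0"
    "\<forall>z\<in>Kc. \<forall>z'\<in>Kc. dist z' z < d \<longrightarrow> dist (snd z' powr fst z') (snd z powr fst z) < e / (V + 1)"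
    unfolding uniformly_continuous_on_def by metis
  obtain \<eta> where \<eta>: "\<eta> > 0" "\<eta> \<le> 1" "\<forall>t x. 0 < t \<longrightarrow> t < \<eta> \<longrightarrow> \<bar>Delta (t *\<^sub>R \<xi>) f x / t - g x \<bullet> \<xi>\<bar> \<le> d/2"
    using C2c_diffquot[OF C2c \<xi>, of "d/2"] d by auto
  define \<delta> where "\<delta> = min (d/2) \<eta>"
  have \<delta>0: "\<delta> > 0" using d \<eta> unfolding \<delta>_def by simp
  have main: "\<bar>(\<integral>x. \<bar>Delta (t *\<^sub>R \<xi>) f x / t\<bar> powr p \<partial>lborel) - (\<integral>x. \<bar>g x \<bullet> \<xi>\<bar> powr Nr \<partial>lborel)\<bar> \<le> e"
    if p: "Nr < p" "p < Nr + \<delta>" and t: "0 < t" "t < \<delta>" for p t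
  proof -
    define U where "U x = \<bar>Delta (t *\<^sub>R \<xi>) f x / t\<bar> powr p" for x
    define W where "W x = \<bar>g x \<bullet> \<xi>\<bar> powr Nr" for x
    have t1: "t \<le> 1" "t < \<eta>" using t \<eta> unfolding \<delta>_def by auto
    have pd: "p - Nr < d/2" "p < Nr + 1" using p \<eta> unfolding \<delta>_def by auto
    have uL: "\<bar>Delta (t *\<^sub>R \<xi>) f x / t\<bar> \<le> L" for x by (rule C2c_dq_bound[OF C2c \<xi> L(2) t(1)])
    have vL: "\<bar>g x \<bullet> \<xi>\<bar> \<le> L" for x
      using Cauchy_Schwarz_ineq2[of "g x" \<xi>] L(2)[rule_format, of x] \<xi> by simp
    have pw: "\<bar>U x - W x\<bar> \<le> e / (V + 1) * indicator (cball 0 (R+1)) x" for x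
    proof (cases "norm x \<le> R + 1")
      case True
      let ?z' = "(p, \<bar>Delta (t *\<^sub>R \<xi>) f x / t\<bar>)" and ?z = "(Nr, \<bar>g x \<bullet> \<xi>\<bar>)"
      have in1: "?z' \<in> Kc" "?z \<in> Kc" using uL[of x] vL[of x] p pd unfolding Kc_def by auto
      have dd: "\<bar>\<bar>Delta (t *\<^sub>R \<xi>) f x / t\<bar> - \<bar>g x \<bullet> \<xi>\<bar>\<bar> \<le> d/2"
        using \<eta>(3)[rule_format, OF t(1) t1(2), of x] by linarith
      have "dist ?z' ?z \<le> dist p Nr + dist \<bar>Delta (t *\<^sub>R \<xi>) f x / t\<bar> \<bar>g x \<bullet> \<xi>\<bar>"
        unfolding dist_Pair_Pair by (rule sqrt_sum_squares_le_sum) auto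
      also have "\<dots> < d" using dd pd p unfolding dist_real_def by simp
      finally have "dist ?z' ?z < d" .
      hence "dist (snd ?z' powr fst ?z') (snd ?z powr fst ?z) < e / (V + 1)" using d(2) in1 by blast
      thus ?thesis using True unfolding U_def W_def dist_real_def by simp
    next
      case False
      have "Delta (t *\<^sub>R \<xi>) f x = 0" by (rule C2c_support[OF R(2) \<xi>]) (use t t1 False in auto)
      moreover have "g x = 0" using R(2) False by auto
      ultimately show ?thesis using False unfolding U_def W_def by simp
    qed
    have mU: "U \<in> borel_measurable lborel" unfolding U_def by (rule meas1[OF b(2)])
    have mW: "W \<in> borel_measurable lborel" unfolding W_def by (rule meas_g[OF b(3)])
    have iU: "integrable lborel U"
    proof (rule integrable_cball_bound[OF mU])
      fix x :: 'a
      show "\<bar>U x\<bar> \<le> L powr p * indicator (cball 0 (R+1)) x"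
      proof (cases "norm x \<le> R + 1")
        case True thus ?thesis unfolding U_def using uL[of x] p Nr by (auto intro!: powr_mono2)
      next
        case False
        have "Delta (t *\<^sub>R \<xi>) f x = 0" by (rule C2c_support[OF R(2) \<xi>]) (use t t1 False in auto)
        thus ?thesis unfolding U_def using False by simp
      qed
    qed
    have iW: "integrable lborel W"
    proof (rule integrable_cball_bound[OF mW])
      fix x :: 'a
      show "\<bar>W x\<bar> \<le> L powr Nr * indicator (cball 0 (R+1)) x"
      proof (cases "norm x \<le> R + 1")
        case True thus ?thesis unfolding W_def using vL[of x] Nr by (auto intro!: powr_mono2)
      next
        case False
        have "g x = 0" using R(2) False by auto
        thus ?thesis unfolding W_def using False by simp
      qed
    qed
    have iI: "integrable lborel (\<lambda>x. e / (V + 1) * indicator (cball (0::'a) (R+1)) x)"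
      using emeasure_lborel_cball_finite by (intro integrable_mult_right integrable_real_indicator) auto
    have "\<bar>integral\<^sup>L lborel U - integral\<^sup>L lborel W\<bar> = \<bar>integral\<^sup>L lborel (\<lambda>x. U x - W x)\<bar>"
      using iU iW by simp
    also have "\<dots> \<le> integral\<^sup>L lborel (\<lambda>x. \<bar>U x - W x\<bar>)"
      using integral_norm_bound[of lborel "\<lambda>x. U x - W x"] by simp
    also have "\<dots> \<le> integral\<^sup>L lborel (\<lambda>x. e / (V + 1) * indicator (cball (0::'a) (R+1)) x)"
      using iU iW iI pw by (intro integral_mono) auto
    also have "\<dots> = e / (V + 1) * V" unfolding V_def by simp
    also have "\<dots> \<le> e" using e V0 by (simp add: field_simps)
    finally show ?thesis unfolding U_def W_def .
  qed
  show ?thesis using \<delta>0 main by blast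
qed




lemma phi_eq:
  fixes f :: "'a::euclidean_space \<Rightarrow> real"
  assumes t: "0 < t" and p: "0 < p"
  shows "Lp_norm p (Delta (t *\<^sub>R \<xi>) f) powr Nr / t powr Nr = (\<integral>x. \<bar>Delta (t *\<^sub>R \<xi>) f x / t\<bar> powr p \<partial>lborel) powr (Nr / p)"
proof -
  define J where "J = (\<integral>x. \<bar>Delta (t *\<^sub>R \<xi>) f x / t\<bar> powr p \<partial>lborel)"
  have J0: "0 \<le> J" unfolding J_def by (rule Bochner_Integration.integral_nonneg) simp
  have "(\<lambda>x. \<bar>Delta (t *\<^sub>R \<xi>) f x\<bar> powr p) = (\<lambda>x. t powr p * \<bar>Delta (t *\<^sub>R \<xi>) f x / t\<bar> powr p)"
  proof
    fix x
    have e: "\<bar>Delta (t *\<^sub>R \<xi>) f x\<bar> = t * \<bar>Delta (t *\<^sub>R \<xi>) f x / t\<bar>" using t by (simp add: abs_divide)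
    show "\<bar>Delta (t *\<^sub>R \<xi>) f x\<bar> powr p = t powr p * \<bar>Delta (t *\<^sub>R \<xi>) f x / t\<bar> powr p"
      by (subst e, subst powr_mult) (use t in auto)
  qed
  hence I: "(\<integral>x. \<bar>Delta (t *\<^sub>R \<xi>) f x\<bar> powr p \<partial>lborel) = t powr p * J" unfolding J_def by simp
  have "Lp_norm p (Delta (t *\<^sub>R \<xi>) f) powr Nr = (t powr p * J) powr (1/p * Nr)"
    unfolding Lp_norm_def I by (simp add: powr_powr)
  also have "\<dots> = (t powr p) powr (Nr/p) * J powr (Nr / p)" using J0 t by (simp add: powr_mult)
  also have "(t powr p) powr (Nr/p) = t powr Nr" using p by (simp add: powr_powr)
  finally show ?thesis using t unfolding J_def by simp
qed

lemma phi_meas: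
  fixes f :: "'a::euclidean_space \<Rightarrow> real"
  assumes c: "continuous_on UNIV f"
  shows "(\<lambda>t. Lp_norm p (Delta (t *\<^sub>R \<xi>) f) powr Nr) \<in> borel_measurable lborel"
proof -
  have "case_prod (\<lambda>t x. \<bar>f (x + t *\<^sub>R \<xi>) - f x\<bar> powr p) \<in> borel_measurable (lborel \<Otimes>\<^sub>M lborel)"
    using meas2[OF c, of \<xi> p] by (simp add: case_prod_beta')
  hence m: "(\<lambda>t. \<integral>x. \<bar>f (x + t *\<^sub>R \<xi>) - f x\<bar> powr p \<partial>lborel) \<in> borel_measurable lborel"
    by (rule lborel.borel_measurable_lebesgue_integral)
  have "(\<lambda>t. ((\<integral>x. \<bar>f (x + t *\<^sub>R \<xi>) - f x\<bar> powr p \<partial>lborel) powr (1/p)) powr Nr) \<in> borel_measurable lborel"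
    by (intro powr_real_measurable m borel_measurable_const)
  thus ?thesis unfolding Lp_norm_def Delta_def by simp
qed

lemma phi_bound:
  fixes f :: "'a::euclidean_space \<Rightarrow> real" and g :: "'a \<Rightarrow> 'a"
  assumes C2c: "C2c_with_gradient f g" and Nr: "0 < Nr"
  shows "\<exists>C. \<forall>p t. Nr < p \<longrightarrow> 0 < t \<longrightarrow> 0 \<le> Lp_norm p (Delta (t *\<^sub>R \<xi>) f) powr Nr \<and> Lp_norm p (Delta (t *\<^sub>R \<xi>) f) powr Nr \<le> C"
proof -
  note b = C2c_basic[OF C2c]
  obtain R where R: "R > 0" "\<forall>x. R < norm x \<longrightarrow> f x = 0 \<and> g x = 0" using b(4) by blast
  obtain M where M: "M > 0" "\<forall>x. \<bar>f x\<bar> \<le> M" using C2c_bounds(1)[OF C2c] by blast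
  define V where "V = measure lborel (cball (0::'a) R)"
  define Q where "Q = max 1 (2 * M)"
  define W where "W = max 1 (2 * V)"
  have Q: "1 \<le> Q" "2 * M \<le> Q" and W: "1 \<le> W" "2 * V \<le> W" unfolding Q_def W_def by auto
  have bnd: "Lp_norm p (Delta (t *\<^sub>R \<xi>) f) powr Nr \<le> Q powr Nr * W" if p: "Nr < p" and t: "0 < t" for p t
  proof -
    let ?c = "t *\<^sub>R \<xi>"
    define D where "D x = \<bar>Delta ?c f x\<bar> powr p" for x
    define B where "B x = Q powr p * (indicator (cball 0 R) x + indicator (cball (- ?c) R) x)" for x
    have pw: "D x \<le> B x" for x
    proof (cases "x \<in> cball 0 R \<or> x \<in> cball (- ?c) R")
      case True
      have "\<bar>Delta ?c f x\<bar> \<le> Q" using M(2)[rule_format, of x] M(2)[rule_format, of "x + ?c"] Q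
        unfolding Delta_def by linarith
      hence "D x \<le> Q powr p" unfolding D_def using p Nr by (intro powr_mono2) auto
      moreover have "Q powr p \<le> B x" unfolding B_def using True by (auto simp: indicator_def)
      ultimately show ?thesis by linarith
    next
      case False
      hence "R < norm x" "R < norm (x + ?c)"
        by (auto simp: dist_norm norm_minus_commute add.commute)
      hence "Delta ?c f x = 0" using R(2) unfolding Delta_def by auto
      thus ?thesis unfolding D_def B_def by simp
    qed
    have mD: "D \<in> borel_measurable lborel" unfolding D_def
      using meas1[OF b(2), where t=1 and \<xi>="t *\<^sub>R \<xi>" and p=p] by simp
    have iB: "integrable lborel B" unfolding B_def
      using emeasure_lborel_cball_finite
      by (intro integrable_mult_right Bochner_Integration.integrable_add integrable_real_indicator) auto
    have D0: "0 \<le> D x" for x unfolding D_def by simp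
    have iD: "integrable lborel D"
      by (rule Bochner_Integration.integrable_bound[OF iB mD]) (use pw D0 in \<open>auto intro!: AE_I2 order_trans[OF _ abs_ge_self]\<close>)
    have "measure lborel (cball (- ?c) R) = V" unfolding V_def using R by (simp add: measure_def emeasure_cball)
    moreover have "integral\<^sup>L lborel (\<lambda>x. indicator (cball (0::'a) R) x + indicator (cball (- ?c) R) x)
        = measure lborel (cball (0::'a) R) + measure lborel (cball (- ?c) R)"
    proof (subst Bochner_Integration.integral_add)
      show "integrable lborel (indicat_real (cball (0::'a) R))"
        using emeasure_lborel_cball_finite by (intro integrable_real_indicator) auto
      show "integrable lborel (indicat_real (cball (- ?c) R))"
        using emeasure_lborel_cball_finite by (intro integrable_real_indicator) auto
    qed simp
    ultimately have IB: "integral\<^sup>L lborel B = Q powr p * (2 * V)" unfolding B_def V_def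
      by simp
    have "integral\<^sup>L lborel D \<le> integral\<^sup>L lborel B" using iD iB pw by (intro integral_mono) auto
    also have "\<dots> \<le> Q powr p * W" unfolding IB using W by (intro mult_left_mono) auto
    finally have ID: "integral\<^sup>L lborel D \<le> Q powr p * W" .
    have ID0: "0 \<le> integral\<^sup>L lborel D" using D0 by (simp add: Bochner_Integration.integral_nonneg)
    have "Lp_norm p (Delta ?c f) powr Nr = (integral\<^sup>L lborel D) powr (Nr / p)"
      unfolding Lp_norm_def D_def by (simp add: powr_powr)
    also have "\<dots> \<le> (Q powr p * W) powr (Nr / p)" using ID ID0 p Nr by (intro powr_mono2) auto
    also have "\<dots> = Q powr Nr * W powr (Nr / p)" using Q W p Nr by (simp add: powr_mult powr_powr)
    also have "W powr (Nr / p) \<le> W powr 1" using W p Nr by (intro powr_mono) auto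
    hence "Q powr Nr * W powr (Nr / p) \<le> Q powr Nr * W" using W by (simp add: mult_left_mono)
    finally show ?thesis .
  qed
  show ?thesis by (rule exI[of _ "Q powr Nr * W"]) (use bnd in auto)
qed




lemma loc_lemma:
  fixes f :: "'a::euclidean_space \<Rightarrow> real" and g :: "'a \<Rightarrow> 'a" and Nr e :: real
  assumes C2c: "C2c_with_gradient f g" and \<xi>: "norm \<xi> = 1" and Nr: "0 < Nr" and e: "0 < e"
  shows "\<exists>\<delta>>0. \<forall>p t. Nr < p \<longrightarrow> p < Nr + \<delta> \<longrightarrow> 0 < t \<longrightarrow> t < \<delta> \<longrightarrow>
     \<bar>Lp_norm p (Delta (t *\<^sub>R \<xi>) f) powr Nr / t powr Nr - (\<integral>x. \<bar>g x \<bullet> \<xi>\<bar> powr Nr \<partial>lborel)\<bar> \<le> e"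
proof -
  define A where "A = (\<integral>x. \<bar>g x \<bullet> \<xi>\<bar> powr Nr \<partial>lborel)"
  have A0: "0 \<le> A" unfolding A_def by (rule Bochner_Integration.integral_nonneg) simp
  define F where "F = at_right Nr \<times>\<^sub>F at_right (0::real)"
  define J where "J z = (\<integral>x. \<bar>Delta (snd z *\<^sub>R \<xi>) f x / snd z\<bar> powr fst z \<partial>lborel)" for z :: "real \<times> real"
  have tJ: "(J \<longlongrightarrow> A) F"
  proof (rule tendstoI)
    fix e' :: real assume e': "0 < e'"
    obtain \<delta> where \<delta>: "\<delta> > 0" "\<forall>p t. Nr < p \<longrightarrow> p < Nr + \<delta> \<longrightarrow> 0 < t \<longrightarrow> t < \<delta> \<longrightarrow>
        \<bar>(\<integral>x. \<bar>Delta (t *\<^sub>R \<xi>) f x / t\<bar> powr p \<partial>lborel) - A\<bar> \<le> e'/2"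
      using J_limit[OF C2c \<xi> Nr, of "e'/2"] e' unfolding A_def by auto
    show "eventually (\<lambda>z. dist (J z) A < e') F"
      unfolding F_def eventually_prod_filter
    proof (intro exI conjI)
      show "eventually (\<lambda>p. Nr < p \<and> p < Nr + \<delta>) (at_right Nr)"
        unfolding eventually_at_right_field using \<delta> by (intro exI[of _ "Nr + \<delta>"]) auto
      show "eventually (\<lambda>t. 0 < t \<and> t < \<delta>) (at_right (0::real))"
        unfolding eventually_at_right_field using \<delta> by (intro exI[of _ "\<delta>"]) auto
      show "\<forall>p t. (Nr < p \<and> p < Nr + \<delta>) \<longrightarrow> (0 < t \<and> t < \<delta>) \<longrightarrow> dist (J (p, t)) A < e'"
      proof (intro allI impI)
        fix p t assume "Nr < p \<and> p < Nr + \<delta>" "0 < t \<and> t < \<delta>"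
        hence "\<bar>(\<integral>x. \<bar>Delta (t *\<^sub>R \<xi>) f x / t\<bar> powr p \<partial>lborel) - A\<bar> \<le> e'/2" using \<delta>(2) by blast
        thus "dist (J (p, t)) A < e'" using e' unfolding J_def dist_real_def by simp
      qed
    qed
  qed
  have "filterlim fst (at_right Nr) F" unfolding F_def by (rule filterlim_fst)
  hence fstlim: "(fst \<longlongrightarrow> Nr) F" unfolding filterlim_at by blast
  have tE: "((\<lambda>z. Nr / fst z) \<longlongrightarrow> Nr / Nr) F" by (intro tendsto_intros fstlim) (use Nr in auto)
  have J0: "eventually (\<lambda>z. 0 \<le> J z) F"
    by (intro always_eventually allI) (simp add: J_def Bochner_Integration.integral_nonneg)
  have "((\<lambda>z. J z powr (Nr / fst z)) \<longlongrightarrow> A powr (Nr / Nr)) F"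
    by (rule tendsto_powr'[OF tJ tE]) (use Nr J0 in auto)
  hence tP: "((\<lambda>z. J z powr (Nr / fst z)) \<longlongrightarrow> A) F" using Nr A0 by simp
  from tendstoD[OF tP e] obtain Pf Pg where P: "eventually Pf (at_right Nr)" "eventually Pg (at_right (0::real))"
    "\<forall>x y. Pf x \<longrightarrow> Pg y \<longrightarrow> dist (J (x, y) powr (Nr / fst (x, y))) A < e"
    unfolding F_def eventually_prod_filter by blast
  obtain b1 where b1: "b1 > Nr" "\<forall>y>Nr. y < b1 \<longrightarrow> Pf y" using P(1) unfolding eventually_at_right_field by blast
  obtain b2 where b2: "b2 > 0" "\<forall>y>0. y < b2 \<longrightarrow> Pg y" using P(2) unfolding eventually_at_right_field by blast
  have "\<bar>Lp_norm p (Delta (t *\<^sub>R \<xi>) f) powr Nr / t powr Nr - A\<bar> \<le> e"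
    if "Nr < p" "p < Nr + min (b1 - Nr) b2" "0 < t" "t < min (b1 - Nr) b2" for p t
  proof -
    have "Pf p" "Pg t" using that b1 b2 by auto
    hence "dist (J (p, t) powr (Nr / p)) A < e" using P(3) by auto
    moreover have "Lp_norm p (Delta (t *\<^sub>R \<xi>) f) powr Nr / t powr Nr = J (p, t) powr (Nr / p)"
      unfolding J_def using phi_eq[OF \<open>0 < t\<close>, of p \<xi> f Nr] that Nr by simp
    ultimately show ?thesis unfolding dist_real_def by simp
  qed
  moreover have "min (b1 - Nr) b2 > 0" using b1 b2 by simp
  ultimately show ?thesis unfolding A_def by blast
qed

lemma abs_powr_real_of_nat:
  fixes y :: real assumes "0 < N"
  shows "\<bar>y\<bar> powr real N = \<bar>y\<bar> ^ N"
proof (cases "y = 0")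
  case True thus ?thesis using assms by simp
next
  case False thus ?thesis by (simp add: powr_realpow)
qed

theorem mainTheorem15:
  fixes f :: "real ^ 'n \<Rightarrow> real" and g :: "real ^ 'n \<Rightarrow> real ^ 'n" and \<xi> :: "real ^ 'n"
  assumes "CARD('n) \<ge> 2"
    and "norm \<xi> = 1"
    and "C2c_with_gradient f g"
  shows "((\<lambda>p. ((1 - real CARD('n) / p) * PiStar_spq_pow (real CARD('n) / p) p (real CARD('n)) f \<xi>)
                 powr (p / real CARD('n)))
          \<longlongrightarrow> (1 / real CARD('n)) * (\<integral>x. \<bar>g x \<bullet> \<xi>\<bar> ^ CARD('n) \<partial>lborel))
         (at_right (real CARD('n)))"
proof -
  define Nr where "Nr = real CARD('n)"
  have Nr2: "2 \<le> Nr" using assms(1) unfolding Nr_def by simp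
  have Nr0: "0 < Nr" using Nr2 by simp
  define A where "A = (\<integral>x. \<bar>g x \<bullet> \<xi>\<bar> powr Nr \<partial>lborel)"
  have A0: "0 \<le> A" unfolding A_def by (rule Bochner_Integration.integral_nonneg) simp
  have AN: "A = (\<integral>x. \<bar>g x \<bullet> \<xi>\<bar> ^ CARD('n) \<partial>lborel)"
    unfolding A_def Nr_def by (simp add: abs_powr_real_of_nat)
  define \<phi> where "\<phi> p t = Lp_norm p (Delta (t *\<^sub>R \<xi>) f) powr Nr" for p t
  note b = C2c_basic[OF assms(3)]
  obtain C where C: "\<forall>p t. Nr < p \<longrightarrow> 0 < t \<longrightarrow> 0 \<le> \<phi> p t \<and> \<phi> p t \<le> C"
    using phi_bound[OF assms(3) Nr0, of \<xi>] unfolding \<phi>_def by blast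
  have lim1: "((\<lambda>p. (1 - Nr/p) * (\<integral>t\<in>{0<..}. t powr (- (Nr/p) * Nr) * \<phi> p t / t \<partial>lborel)) \<longlongrightarrow> A/Nr) (at_right Nr)"
  proof (rule integral_limit[OF Nr2 A0])
    show "\<phi> p \<in> borel_measurable lborel" for p unfolding \<phi>_def by (rule phi_meas[OF b(2)])
    show "0 \<le> \<phi> p t \<and> \<phi> p t \<le> C" if "Nr < p" "p < Nr + 1" "0 < t" for p t using C that by blast
    show "\<exists>\<delta>>0. \<forall>p t. Nr < p \<longrightarrow> p < Nr + \<delta> \<longrightarrow> 0 < t \<longrightarrow> t < \<delta> \<longrightarrow> \<bar>\<phi> p t / t powr Nr - A\<bar> \<le> e"
      if "0 < e" for e
      using loc_lemma[OF assms(3) assms(2) Nr0 that] unfolding \<phi>_def A_def by blast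
  qed
  have PS: "PiStar_spq_pow (Nr / p) p Nr f \<xi> = (\<integral>t\<in>{0<..}. t powr (- (Nr/p) * Nr) * \<phi> p t / t \<partial>lborel)" for p
    unfolding PiStar_spq_pow_def \<phi>_def by simp
  have lim1': "((\<lambda>p. (1 - Nr/p) * PiStar_spq_pow (Nr / p) p Nr f \<xi>) \<longlongrightarrow> A/Nr) (at_right Nr)"
    using lim1 unfolding PS .
  have base0: "eventually (\<lambda>p. 0 \<le> (1 - Nr/p) * PiStar_spq_pow (Nr / p) p Nr f \<xi>) (at_right Nr)"
  proof -
    have "eventually (\<lambda>p. Nr < p) (at_right Nr)" by (rule eventually_at_right_less)
    thus ?thesis
    proof eventually_elim
      case (elim p)
      have "0 \<le> (\<integral>t\<in>{0<..}. t powr (- (Nr/p) * Nr) * \<phi> p t / t \<partial>lborel)"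
        unfolding set_lebesgue_integral_def
      proof (rule Bochner_Integration.integral_nonneg)
        fix t :: real
        show "0 \<le> indicator {0<..} t *\<^sub>R (t powr (- (Nr/p) * Nr) * \<phi> p t / t)"
          using C elim by (cases "0 < t") (auto simp: indicator_def)
      qed
      moreover have "0 \<le> 1 - Nr / p" using elim Nr0 by (simp add: field_simps)
      ultimately show ?case unfolding PS by simp
    qed
  qed
  have lim2: "((\<lambda>p. p / Nr) \<longlongrightarrow> Nr / Nr) (at_right Nr)" by (intro tendsto_intros) (use Nr0 in auto)
  have "((\<lambda>p. ((1 - Nr/p) * PiStar_spq_pow (Nr / p) p Nr f \<xi>) powr (p / Nr)) \<longlongrightarrow> (A/Nr) powr (Nr/Nr)) (at_right Nr)"
    by (rule tendsto_powr'[OF lim1' lim2]) (use Nr0 base0 in auto)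
  moreover have "(A/Nr) powr (Nr/Nr) = (1 / Nr) * (\<integral>x. \<bar>g x \<bullet> \<xi>\<bar> ^ CARD('n) \<partial>lborel)"
    using Nr0 A0 AN by simp
  ultimately show ?thesis unfolding Nr_def by simp
qed


end
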